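(* Let $d,b,n$ be positive integers and $R_0(t)=\prod_{-n\le l\le n}(t-dl)$. For a polynomial $q$ put $p(t)=q(t)/R_0(t)$ and $p_k=(p(t)(t-dk))|_{t=dk}$ for $-n\le k\le n$. Then in each of the following cases $\deg q\le 2n$, every $p_k$ is an integer, and $|p_k|\le C$: (i) $q(t)=d^{2n}\prod_{(d+2(i-1))n<l\le(d+2i)n}(t-l)$ with $1\le i\le b$, and $C=\frac{1}{(n!)^2}\prod_{(2d+2(i-1))n<l\le(2d+2i)n}l$; (ii) $q(t)=d^{2n}\prod_{(d+2(i-1))n<l\le(d+2i)n}(t+l)$ with $1\le i\le b$, and the same $C$ as in (i); (iii) $q(t)=d^{2n}(2n)!$ and $C=\frac{(2n)!}{(n!)^2}$.
   Context: All products are over integers $l$ in the indicated ranges. *)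

theory Defs
  imports "HOL-Computational_Algebra.Polynomial"
begin

definition R0 :: "nat \<Rightarrow> nat \<Rightarrow> real poly" where
  "R0 d n = (\<Prod>l\<in>{-int n..int n}. [:- (of_nat d * of_int l), 1:])"

text \<open>Since R_0 has the simple
  factor (t - d k), p(t)(t - d k) = q(t) / (R_0(t) / (t - d k)) as rational functions,
  with R_0(t)/(t - d k) an exact polynomial quotient; we evaluate this at t = d k.\<close>
definition pk :: "nat \<Rightarrow> nat \<Rightarrow> real poly \<Rightarrow> int \<Rightarrow> real" where
  "pk d n q k = poly q (of_nat d * of_int k)
      / poly (R0 d n div [:- (of_nat d * of_int k), 1:]) (of_nat d * of_int k)"

end

theory Submission
  imports Defs
begin

lemma prod_Ioc_shift:
  fixes x :: int
  shows "(\<Prod>l\<in>{x<..x+int N}. f l) = (\<Prod>i<N. f (x+1+int i))"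
proof (induction N)
  case 0 then show ?case by simp
next
  case (Suc N)
  have e: "{x<..x+int (Suc N)} = insert (x+1+int N) {x<..x+int N}" by auto
  show ?case unfolding e using Suc by (simp add: lessThan_Suc mult.commute)
qed

lemma absD:
  fixes n :: nat and k :: int
  assumes "-int n \<le> k" "k \<le> int n"
  shows "\<bar>\<Prod>l\<in>{-int n..int n}-{k}. real_of_int (k-l)\<bar> = fact (nat (int n+k)) * fact (nat (int n-k))"
proof -
  let ?A = "{(-int n-1)<..(-int n-1)+int (nat (int n+k))}"
  let ?B = "{k<..k+int (nat (int n-k))}"
  have e: "{-int n..int n}-{k} = ?A \<union> ?B" using assms by auto
  have dj: "?A \<inter> ?B = {}" using assms by auto
  have "\<bar>\<Prod>l\<in>{-int n..int n}-{k}. real_of_int (k-l)\<bar> = (\<Prod>l\<in>?A \<union> ?B. \<bar>real_of_int (k-l)\<bar>)"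
    unfolding e by (simp add: abs_prod)
  also have "\<dots> = (\<Prod>l\<in>?A. \<bar>real_of_int (k-l)\<bar>) * (\<Prod>l\<in>?B. \<bar>real_of_int (k-l)\<bar>)"
    by (rule prod.union_disjoint) (use dj in auto)
  also have "(\<Prod>l\<in>?A. \<bar>real_of_int (k-l)\<bar>) = fact (nat (int n+k))"
  proof -
    let ?N = "nat (int n+k)"
    have "(\<Prod>l\<in>?A. \<bar>real_of_int (k-l)\<bar>) = (\<Prod>i<?N. \<bar>real_of_int (k-(-int n-1+1+int i))\<bar>)"
      by (rule prod_Ioc_shift)
    also have "\<dots> = (\<Prod>i<?N. real (?N - i))"
      by (rule prod.cong) (use assms in auto)
    also have "\<dots> = fact ?N" by (simp add: fact_prod_rev atLeast0LessThan)
    finally show ?thesis .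
  qed
  also have "(\<Prod>l\<in>?B. \<bar>real_of_int (k-l)\<bar>) = fact (nat (int n-k))"
  proof -
    let ?N = "nat (int n-k)"
    have "(\<Prod>l\<in>?B. \<bar>real_of_int (k-l)\<bar>) = (\<Prod>i<?N. \<bar>real_of_int (k-(k+1+int i))\<bar>)"
      by (rule prod_Ioc_shift)
    also have "\<dots> = (\<Prod>i<?N. real (Suc i))"
      by (rule prod.cong) auto
    also have "\<dots> = fact ?N" by (simp add: fact_prod_Suc atLeast0LessThan)
    finally show ?thesis .
  qed
  finally show ?thesis .
qed

lemma facts_dvd:
  fixes n :: nat and k :: int
  assumes "-int n \<le> k" "k \<le> int n"
  shows "(fact (nat (int n+k)) * fact (nat (int n-k)) :: int) dvd fact (2*n)"
proof -
  have "nat (int n+k) + nat (int n-k) = 2*n" using assms by linarith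
  then show ?thesis using fact_fact_dvd_fact[of "nat (int n+k)" "nat (int n-k)"]
    by (metis of_nat_dvd_iff of_nat_fact of_nat_mult)
qed

lemma facts_ge:
  fixes n :: nat and k :: int
  assumes "-int n \<le> k" "k \<le> int n"
  shows "(fact n)^2 \<le> (fact (nat (int n+k)) * fact (nat (int n-k)) :: real)"
proof -
  let ?a = "nat (int n+k)" 
  have b: "nat (int n-k) = 2*n - ?a" "?a \<le> 2*n" using assms by linarith+
  have 1: "fact ?a * fact (2*n - ?a) * (2*n choose ?a) = (fact (2*n) :: nat)"
    using binomial_fact_lemma[OF b(2)] .
  have 2: "fact n * fact (2*n - n) * (2*n choose n) = (fact (2*n) :: nat)"
    using binomial_fact_lemma[of n "2*n"] by simp
  have c: "(2*n choose ?a) \<le> 2*n choose n" by (rule binomial_maximum')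
  have pos: "0 < (2*n choose ?a)" using b(2) by simp
  have "fact n * fact n * (2*n choose ?a) \<le> fact n * fact n * (2*n choose n)"
    using c by simp
  also have "\<dots> = fact ?a * fact (2*n - ?a) * (2*n choose ?a)" using 1 2 by simp
  finally have "fact n * fact n \<le> (fact ?a * fact (2*n - ?a) :: nat)"
    using pos by (meson mult_le_cancel2 not_gr0)
  then have "real (fact n * fact n) \<le> real (fact ?a * fact (2*n - ?a))" by linarith
  then show ?thesis using b by (simp add: power2_eq_square)
qed

lemma R0_eval:
  fixes n d :: nat and k :: int
  assumes "k \<in> {-int n..int n}"
  shows "poly (R0 d n div [:- (of_nat d * of_int k), 1:]) (of_nat d * of_int k)
       = real d ^ (2*n) * (\<Prod>l\<in>{-int n..int n}-{k}. real_of_int (k-l))"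
proof -
  let ?S = "{-int n..int n}"
  let ?f = "\<lambda>l. [:- (of_nat d * of_int l), 1:] :: real poly"
  have "R0 d n = ?f k * prod ?f (?S - {k})"
    unfolding R0_def using assms by (simp add: prod.remove)
  then have "R0 d n div ?f k = prod ?f (?S - {k})"
    by (metis nonzero_mult_div_cancel_left pCons_eq_0_iff one_neq_zero)
  then have "poly (R0 d n div ?f k) (of_nat d * of_int k) = (\<Prod>l\<in>?S-{k}. real d * real_of_int (k-l))"
    by (simp add: poly_prod algebra_simps)
  also have "\<dots> = real d ^ card (?S-{k}) * (\<Prod>l\<in>?S-{k}. real_of_int (k-l))"
    by (simp add: prod.distrib)
  also have "card (?S-{k}) = 2*n" using assms by (simp add: card_Diff_singleton) 
  finally show ?thesis .
qed

lemma G: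
  fixes Pi :: int and D B :: real and F n :: nat
  assumes "\<bar>D\<bar> = real F" "int F dvd Pi" "(fact n)^2 \<le> real F" "real_of_int \<bar>Pi\<bar> \<le> B"
  shows "real_of_int Pi / D \<in> \<int> \<and> \<bar>real_of_int Pi / D\<bar> \<le> (1 / (fact n)^2) * B"
proof
  obtain m where m: "Pi = int F * m" using assms(2) by blast
  have Fp: "real F > 0" using assms(3) by (smt (verit) fact_gt_zero zero_less_power)
  have "D = real F \<or> D = - real F" using assms(1) by linarith
  then have "real_of_int Pi / D = real_of_int m \<or> real_of_int Pi / D = - real_of_int m"
    using Fp m by auto
  then show "real_of_int Pi / D \<in> \<int>" by (metis Ints_minus Ints_of_int)
  have "\<bar>real_of_int Pi / D\<bar> = real_of_int \<bar>Pi\<bar> / real F" using assms(1) by (simp add: abs_divide)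
  also have "\<dots> \<le> B / real F" using assms(4) Fp by (simp add: divide_right_mono)
  also have "\<dots> \<le> B / (fact n)^2"
    using assms Fp by (intro divide_left_mono) (auto intro: mult_pos_pos)
  finally show "\<bar>real_of_int Pi / D\<bar> \<le> (1 / (fact n)^2) * B" by simp
qed

lemma pk_reduce:
  fixes d n :: nat and k :: int
  assumes "d > 0" "k \<in> {-int n..int n}"
    "poly q (of_nat d * of_int k) = real d ^ (2*n) * real_of_int Pi"
  shows "pk d n q k = real_of_int Pi / (\<Prod>l\<in>{-int n..int n}-{k}. real_of_int (k-l))"
  unfolding pk_def R0_eval[OF assms(2)] assms(3) using assms(1) by simp

lemma common:
  fixes d n :: nat and k Pi :: int and B :: real
  assumes "d > 0" "k \<in> {-int n..int n}"
    "poly q (of_nat d * of_int k) = real d ^ (2*n) * real_of_int Pi"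
    "int (fact (nat (int n+k)) * fact (nat (int n-k))) dvd Pi"
    "real_of_int \<bar>Pi\<bar> \<le> B"
  shows "pk d n q k \<in> \<int> \<and> \<bar>pk d n q k\<bar> \<le> (1 / (fact n)^2) * B"
  unfolding pk_reduce[OF assms(1-3)]
  apply (rule G[where F = "fact (nat (int n+k)) * fact (nat (int n-k))"])
  using absD facts_ge assms by auto

lemma case1:
  fixes d n i :: nat and k :: int
  assumes "d > 0" "i \<ge> 1" "k \<in> {-int n..int n}"
  shows "pk d n (smult (real d ^ (2*n)) (\<Prod>l\<in>{(int d + 2*(int i - 1)) * int n <.. (int d + 2 * int i) * int n}. [:- of_int l, 1:])) k \<in> \<int>
   \<and> \<bar>pk d n (smult (real d ^ (2*n)) (\<Prod>l\<in>{(int d + 2*(int i - 1)) * int n <.. (int d + 2 * int i) * int n}. [:- of_int l, 1:])) k\<bar>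
     \<le> (1 / (fact n)^2) * (\<Prod>l\<in>{(2 * int d + 2*(int i - 1)) * int n <.. (2 * int d + 2 * int i) * int n}. (of_int l :: real))"
proof -
  define a where "a = (int d + 2*(int i - 1)) * int n"
  define c where "c = a + int d * int n"
  have I: "(int d + 2 * int i) * int n = a + int (2*n)" by (simp add: a_def algebra_simps)
  have J: "(2 * int d + 2*(int i - 1)) * int n = c" "(2 * int d + 2 * int i) * int n = c + int (2*n)"
    by (simp_all add: c_def a_def algebra_simps)
  define Pi where "Pi = (\<Prod>l\<in>{a<..a+int (2*n)}. int d * k - l)"
  have kb: "int d * k \<le> int d * int n" "- (int d * int n) \<le> int d * k" using assms(3)
    by (auto intro: mult_left_mono simp del: mult_minus_right simp add: mult_minus_right[symmetric])
  have an: "int d * int n \<le> a" unfolding a_def using assms(2) by (simp add: mult_right_mono)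
  have poly: "poly (smult (real d ^ (2*n)) (\<Prod>l\<in>{a<..a+int (2*n)}. [:- of_int l, 1:])) (of_nat d * of_int k)
     = real d ^ (2*n) * real_of_int Pi"
    by (simp add: Pi_def poly_prod)
  have "Pi = (\<Prod>j<2*n. (-1) * ((a+1 - int d * k) + int j))"
    unfolding Pi_def by (subst prod_Ioc_shift) (auto intro: prod.cong)
  also have "\<dots> = (-1)^(2*n) * pochhammer (a+1 - int d * k) (2*n)"
    by (simp only: prod.distrib prod_constant card_lessThan) (simp add: pochhammer_prod atLeast0LessThan)
  finally have "fact (2*n) dvd Pi" using fact_dvd_pochhammer by simp
  then have dv: "int (fact (nat (int n+k)) * fact (nat (int n-k))) dvd Pi"
    using facts_dvd[of n k] assms(3) by (auto intro: dvd_trans)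
  have "\<bar>Pi\<bar> = (\<Prod>l\<in>{a<..a+int (2*n)}. \<bar>int d * k - l\<bar>)" by (simp add: Pi_def abs_prod)
  also have "\<dots> \<le> (\<Prod>l\<in>{a<..a+int (2*n)}. l + int d * int n)"
    by (rule prod_mono) (use kb an in auto)
  also have "\<dots> = (\<Prod>j<2*n. c + 1 + int j)"
    by (subst prod_Ioc_shift) (auto simp: c_def intro: prod.cong)
  finally have "real_of_int \<bar>Pi\<bar> \<le> (\<Prod>j<2*n. real_of_int (c + 1 + int j))"
    by (metis of_int_le_iff of_int_prod)
  also have "\<dots> = (\<Prod>l\<in>{c<..c+int (2*n)}. real_of_int l)" by (rule prod_Ioc_shift[symmetric])
  finally have bd: "real_of_int \<bar>Pi\<bar> \<le> (\<Prod>l\<in>{c<..c+int (2*n)}. real_of_int l)" .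
  show ?thesis unfolding a_def[symmetric] I J
    using common[OF assms(1,3) poly dv bd] .
qed

lemma case2:
  fixes d n i :: nat and k :: int
  assumes "d > 0" "i \<ge> 1" "k \<in> {-int n..int n}"
  shows "pk d n (smult (real d ^ (2*n)) (\<Prod>l\<in>{(int d + 2*(int i - 1)) * int n <.. (int d + 2 * int i) * int n}. [:of_int l, 1:])) k \<in> \<int>
   \<and> \<bar>pk d n (smult (real d ^ (2*n)) (\<Prod>l\<in>{(int d + 2*(int i - 1)) * int n <.. (int d + 2 * int i) * int n}. [:of_int l, 1:])) k\<bar>
     \<le> (1 / (fact n)^2) * (\<Prod>l\<in>{(2 * int d + 2*(int i - 1)) * int n <.. (2 * int d + 2 * int i) * int n}. (of_int l :: real))"
proof -
  define a where "a = (int d + 2*(int i - 1)) * int n"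
  define c where "c = a + int d * int n"
  have I: "(int d + 2 * int i) * int n = a + int (2*n)" by (simp add: a_def algebra_simps)
  have J: "(2 * int d + 2*(int i - 1)) * int n = c" "(2 * int d + 2 * int i) * int n = c + int (2*n)"
    by (simp_all add: c_def a_def algebra_simps)
  define Pi where "Pi = (\<Prod>l\<in>{a<..a+int (2*n)}. int d * k + l)"
  have kb: "int d * k \<le> int d * int n" "- (int d * int n) \<le> int d * k" using assms(3)
    by (auto intro: mult_left_mono simp del: mult_minus_right simp add: mult_minus_right[symmetric])
  have an: "int d * int n \<le> a" unfolding a_def using assms(2) by (simp add: mult_right_mono)
  have poly: "poly (smult (real d ^ (2*n)) (\<Prod>l\<in>{a<..a+int (2*n)}. [:of_int l, 1:])) (of_nat d * of_int k)
     = real d ^ (2*n) * real_of_int Pi"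
    by (simp add: Pi_def poly_prod add.commute)
  have "Pi = (\<Prod>j<2*n. (a+1 + int d * k) + int j)"
    unfolding Pi_def by (subst prod_Ioc_shift) (auto intro: prod.cong)
  also have "\<dots> = pochhammer (a+1 + int d * k) (2*n)"
    by (simp add: pochhammer_prod atLeast0LessThan)
  finally have "fact (2*n) dvd Pi" using fact_dvd_pochhammer by simp
  then have dv: "int (fact (nat (int n+k)) * fact (nat (int n-k))) dvd Pi"
    using facts_dvd[of n k] assms(3) by (auto intro: dvd_trans)
  have "\<bar>Pi\<bar> = (\<Prod>l\<in>{a<..a+int (2*n)}. \<bar>int d * k + l\<bar>)" by (simp add: Pi_def abs_prod)
  also have "\<dots> \<le> (\<Prod>l\<in>{a<..a+int (2*n)}. l + int d * int n)"
    by (rule prod_mono) (use kb an in auto)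
  also have "\<dots> = (\<Prod>j<2*n. c + 1 + int j)"
    by (subst prod_Ioc_shift) (auto simp: c_def intro: prod.cong)
  finally have "real_of_int \<bar>Pi\<bar> \<le> (\<Prod>j<2*n. real_of_int (c + 1 + int j))"
    by (metis of_int_le_iff of_int_prod)
  also have "\<dots> = (\<Prod>l\<in>{c<..c+int (2*n)}. real_of_int l)" by (rule prod_Ioc_shift[symmetric])
  finally have bd: "real_of_int \<bar>Pi\<bar> \<le> (\<Prod>l\<in>{c<..c+int (2*n)}. real_of_int l)" .
  show ?thesis unfolding a_def[symmetric] I J
    using common[OF assms(1,3) poly dv bd] .
qed

lemma case3:
  fixes d n :: nat and k :: int
  assumes "d > 0" "k \<in> {-int n..int n}"
  shows "pk d n [: real d ^ (2*n) * fact (2*n) :] k \<in> \<int> \<and> \<bar>pk d n [: real d ^ (2*n) * fact (2*n) :] k\<bar> \<le> fact (2*n) / (fact n)^2"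
proof -
  have poly: "poly [: real d ^ (2*n) * fact (2*n) :] (of_nat d * of_int k) = real d ^ (2*n) * real_of_int (fact (2*n))"
    by simp
  have dv: "int (fact (nat (int n+k)) * fact (nat (int n-k))) dvd fact (2*n)"
    using facts_dvd[of n k] assms(2) by simp
  have bd: "real_of_int \<bar>fact (2*n)\<bar> \<le> fact (2*n)" by simp
  show ?thesis using common[OF assms poly dv bd] by simp
qed

lemma deg_prod_lin:
  fixes I :: "int set" and c :: real
  assumes "finite I"
  shows "degree (smult c (\<Prod>l\<in>I. [:f l, 1:])) \<le> card I"
proof -
  have "degree (\<Prod>l\<in>I. [:f l, 1:]) \<le> (\<Sum>l\<in>I. (degree \<circ> (\<lambda>l. [:f l, 1:])) l)"
    by (rule degree_prod_sum_le) (use assms in auto)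
  also have "\<dots> = card I" by simp
  finally show ?thesis using degree_smult_le le_trans by blast
qed

theorem lemma3p2:
  fixes d b n :: nat
  assumes "d > 0" and "b > 0" and "n > 0"
  shows
   "(\<forall>i\<in>{1..b}.
      let q = smult (real d ^ (2*n))
                (\<Prod>l\<in>{(int d + 2*(int i - 1)) * int n <.. (int d + 2 * int i) * int n}. [:- of_int l, 1:]);
          C = (1 / (fact n)^2) * (\<Prod>l\<in>{(2 * int d + 2*(int i - 1)) * int n <.. (2 * int d + 2 * int i) * int n}. (of_int l :: real))
      in degree q \<le> 2*n \<and> (\<forall>k\<in>{-int n..int n}. pk d n q k \<in> \<int> \<and> \<bar>pk d n q k\<bar> \<le> C))
  \<and> (\<forall>i\<in>{1..b}.
      let q = smult (real d ^ (2*n))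
                (\<Prod>l\<in>{(int d + 2*(int i - 1)) * int n <.. (int d + 2 * int i) * int n}. [:of_int l, 1:]);
          C = (1 / (fact n)^2) * (\<Prod>l\<in>{(2 * int d + 2*(int i - 1)) * int n <.. (2 * int d + 2 * int i) * int n}. (of_int l :: real))
      in degree q \<le> 2*n \<and> (\<forall>k\<in>{-int n..int n}. pk d n q k \<in> \<int> \<and> \<bar>pk d n q k\<bar> \<le> C))
  \<and> (let q = [: real d ^ (2*n) * fact (2*n) :];
          C = fact (2*n) / (fact n)^2
      in degree q \<le> 2*n \<and> (\<forall>k\<in>{-int n..int n}. pk d n q k \<in> \<int> \<and> \<bar>pk d n q k\<bar> \<le> C))"
proof (intro conjI ballI)
  fix i assume i: "i \<in> {1..b}"
  have card: "card {(int d + 2*(int i - 1)) * int n <.. (int d + 2 * int i) * int n} = 2*n"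
    by (simp add: algebra_simps nat_mult_distrib)
  show "let q = smult (real d ^ (2*n))
                (\<Prod>l\<in>{(int d + 2*(int i - 1)) * int n <.. (int d + 2 * int i) * int n}. [:- of_int l, 1:]);
          C = (1 / (fact n)^2) * (\<Prod>l\<in>{(2 * int d + 2*(int i - 1)) * int n <.. (2 * int d + 2 * int i) * int n}. (of_int l :: real))
      in degree q \<le> 2*n \<and> (\<forall>k\<in>{-int n..int n}. pk d n q k \<in> \<int> \<and> \<bar>pk d n q k\<bar> \<le> C)"
    unfolding Let_def using case1[OF assms(1)] i deg_prod_lin[where f="\<lambda>l. - of_int l" and c="real d ^ (2*n)" and I="{(int d + 2*(int i - 1)) * int n <.. (int d + 2 * int i) * int n}"] card by (simp del: degree_smult_eq)
  show "let q = smult (real d ^ (2*n))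
                (\<Prod>l\<in>{(int d + 2*(int i - 1)) * int n <.. (int d + 2 * int i) * int n}. [:of_int l, 1:]);
          C = (1 / (fact n)^2) * (\<Prod>l\<in>{(2 * int d + 2*(int i - 1)) * int n <.. (2 * int d + 2 * int i) * int n}. (of_int l :: real))
      in degree q \<le> 2*n \<and> (\<forall>k\<in>{-int n..int n}. pk d n q k \<in> \<int> \<and> \<bar>pk d n q k\<bar> \<le> C)"
    unfolding Let_def using case2[OF assms(1)] i deg_prod_lin[where f="\<lambda>l. of_int l" and c="real d ^ (2*n)" and I="{(int d + 2*(int i - 1)) * int n <.. (int d + 2 * int i) * int n}"] card by (simp del: degree_smult_eq)
next
  show "let q = [: real d ^ (2*n) * fact (2*n) :];
          C = fact (2*n) / (fact n)^2
      in degree q \<le> 2*n \<and> (\<forall>k\<in>{-int n..int n}. pk d n q k \<in> \<int> \<and> \<bar>pk d n q k\<bar> \<le> C)"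
    unfolding Let_def using case3[OF assms(1)] by simp
qed

end
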